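(* Fix $M>1$ and a mass $m>0$. There is a constant $K>0$ (independent of the graph and of the scale attribution) such that for every connected Feynman graph $\mathcal{G}$ of the rank-$6$ quartic melonic $U(1)$ model, every choice of the (fixed) momenta of its external faces, and every scale attribution $\mu=\{i_\ell\}_{\ell\in\mathcal{L}(\mathcal{G})}$, the sliced amplitude satisfies $$|\mathcal{A}_{\mu}(\mathcal{G})|\leq K^{L(\mathcal{G})}\prod_{i\ge 1}\prod_{k=1}^{k(i)}M^{\omega(\mathcal{G}_i^k)},$$ where for a connected subgraph $\mathcal{H}$ the divergence degree is $\omega(\mathcal{H})=-2L(\mathcal{H})+F(\mathcal{H})-R(\mathcal{H})$.
   Context: Momenta: $\vec p=(p_1,\dots,p_6)\in\mathbb{Z}^6$, $\vec p^{\,2}=\sum_c p_c^2$. Covariance $C(\vec p)=\delta(\sum_c p_c,0)/(\vec p^{\,2}+m^2)$ (Kronecker delta). Slices: $\chi_1(\vec p)=1$ if $\vec p^{\,2}\le M^2$ and $0$ otherwise; for $i\ge2$, $\chi_i(\vec p)=1$ if $M^{2(i-1)}<\vec p^{\,2}\le M^{2i}$ and $0$ otherwise; $C_i(\vec p)=C(\vec p)\chi_i(\vec p)$. Feynman graphs: each interaction vertex is a "bubble" $b_c$ ($c\in\{1,\dots,6\}$), a bipartite edge-colored graph on two white nodes $w_1,w_2$ (fields $\bar\phi$) and two black nodes $b_1,b_2$ (fields $\phi$), with edges of all colors $c'\neq c$ between $w_1,b_1$ and between $w_2,b_2$, and edges of color $c$ between $w_1,b_2$ and between $w_2,b_1$.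 A Feynman graph $\mathcal{G}$ is obtained by joining black and white nodes of such bubbles by color-$0$ edges called lines (set $\mathcal{L}(\mathcal{G})$, number $L(\mathcal{G})$), possibly leaving some nodes with external color-$0$ half-lines. Faces are the connected components of the subgraphs with colors $\{0,c\}$, $c=1,\dots,6$; closed ones (cycles) are internal faces, those ending on external half-lines are external faces. Each internal face $f$ carries a summed momentum $p_f\in\mathbb{Z}$, each external face a fixed momentum; a line $\ell$ carries $\vec p^{\,\ell}\in\mathbb{Z}^6$ whose $c$-component is the momentum of the face of colors $\{0,c\}$ through $\ell$. For a scale attribution $\mu$ (an integer $i_\ell\ge1$ per line), $\mathcal{A}_\mu(\mathcal{G})=\sum_{(p_f)_{f \text{ internal}}}\prod_{\ell}C_{i_\ell}(\vec p^{\,\ell})$. For $i\ge1$, $\mathcal{G}_i$ is the subgraph formed by the lines with $i_\ell\ge i$ (with the bubbles they touch), with connected components $\mathcal{G}_i^1,\dots,\mathcal{G}_i^{k(i)}$. For a subgraph $\mathcal{H}$: $L(\mathcal{H})$ is its number of lines, $F(\mathcal{H})$ the number of its internal faces (faces of $\mathcal{G}$ that are cycles all of whose color-$0$ edges lie in $\mathcal{H}$), and $R(\mathcal{H})$ the rank of the incidence matrix $\epsilon_{\ell f}$ between lines $\ell$ of $\mathcal{H}$ and internal faces $f$ of $\mathcal{H}$ ($\epsilon_{\ell f}\neq0$ iff $\ell$ lies on $f$, with value $\pm1$ according to relative orientation). *)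

theory Defs
  imports "HOL-Analysis.Analysis"
begin

text \<open>A node is (b, w, j): bubble b,
  w = True for a white node (field phibar), w = False for a black node (field phi),
  j = False for index 1, j = True for index 2.\<close>

type_synonym node = "nat \<times> bool \<times> bool"
type_synonym line = "node \<times> node"   \<comment> \<open>(white node, black node)\<close>
type_synonym face = "nat \<times> node set" \<comment> \<open>(colour c, node set of the {0,c}-component)\<close>

definition graph_nodes :: "nat set \<Rightarrow> node set" where
  "graph_nodes B = {(b, w, j). b \<in> B}"

definition bub :: "node \<Rightarrow> nat" where
  "bub x = fst x"

text \<open>The colour-c partner of a node inside its bubble (bubble b has colour col b):
  for c \<noteq> col b, w1-b1 and w2-b2; for c = col b, w1-b2 and w2-b1.\<close>
definition cpart :: "(nat \<Rightarrow> nat) \<Rightarrow> nat \<Rightarrow> node \<Rightarrow> node" where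
  "cpart col c x = (case x of (b, w, j) \<Rightarrow> (b, \<not> w, if c = col b then \<not> j else j))"

text \<open>A Feynman graph: finite set of bubbles B with colours in {1..6}, and a set of
  lines L, each joining a white node to a black node of the bubbles in B, every node
  carrying at most one line (graph_nodes without a line carry an external half-line).\<close>
definition feyn_graph :: "nat set \<Rightarrow> (nat \<Rightarrow> nat) \<Rightarrow> line set \<Rightarrow> bool" where
  "feyn_graph B col L \<longleftrightarrow> finite B \<and> (\<forall>b\<in>B. col b \<in> {1..6}) \<and>
     (\<forall>(x, y)\<in>L. x \<in> graph_nodes B \<and> y \<in> graph_nodes B \<and> fst (snd x) \<and> \<not> fst (snd y)) \<and>
     inj_on fst L \<and> inj_on snd L"

definition matched :: "line set \<Rightarrow> node \<Rightarrow> bool" where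
  "matched L x \<longleftrightarrow> (\<exists>l\<in>L. fst l = x \<or> snd l = x)"

definition connected_graph :: "nat set \<Rightarrow> line set \<Rightarrow> bool" where
  "connected_graph B L \<longleftrightarrow>
     (\<forall>b\<in>B. \<forall>b'\<in>B. (b, b') \<in> ({(bub (fst l), bub (snd l)) | l. l \<in> L} \<union>
                                 {(bub (snd l), bub (fst l)) | l. l \<in> L})\<^sup>*)"

text \<open>Edges of the subgraph of colours {0,c}.\<close>
definition face_rel :: "(nat \<Rightarrow> nat) \<Rightarrow> line set \<Rightarrow> nat \<Rightarrow> node rel" where
  "face_rel col L c = {(x, cpart col c x) | x. True} \<union> L \<union> L\<inverse>"

definition face_comp :: "(nat \<Rightarrow> nat) \<Rightarrow> line set \<Rightarrow> nat \<Rightarrow> node \<Rightarrow> node set" where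
  "face_comp col L c x = {y. (x, y) \<in> (face_rel col L c)\<^sup>*}"

definition all_faces :: "nat set \<Rightarrow> (nat \<Rightarrow> nat) \<Rightarrow> line set \<Rightarrow> face set" where
  "all_faces B col L = {(c, face_comp col L c x) | c x. c \<in> {1..6} \<and> x \<in> graph_nodes B}"

text \<open>Internal all_faces are the closed ones (cycles): every node on them carries a line.\<close>
definition int_faces :: "nat set \<Rightarrow> (nat \<Rightarrow> nat) \<Rightarrow> line set \<Rightarrow> face set" where
  "int_faces B col L = {f \<in> all_faces B col L. \<forall>x\<in>snd f. matched L x}"

definition ext_faces :: "nat set \<Rightarrow> (nat \<Rightarrow> nat) \<Rightarrow> line set \<Rightarrow> face set" where
  "ext_faces B col L = all_faces B col L - int_faces B col L"

definition face_thru :: "(nat \<Rightarrow> nat) \<Rightarrow> line set \<Rightarrow> nat \<Rightarrow> line \<Rightarrow> face" where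
  "face_thru col L c l = (c, face_comp col L c (fst l))"

definition on_face :: "(nat \<Rightarrow> nat) \<Rightarrow> line set \<Rightarrow> line \<Rightarrow> face \<Rightarrow> bool" where
  "on_face col L l f \<longleftrightarrow> face_thru col L (fst f) l = f"

text \<open>Incidence matrix (all lines oriented white to black; all_faces oriented accordingly,
  so every nonzero entry is +1).\<close>
definition eps :: "(nat \<Rightarrow> nat) \<Rightarrow> line set \<Rightarrow> line \<Rightarrow> face \<Rightarrow> real" where
  "eps col L l f = (if on_face col L l f then 1 else 0)"

definition sub_int_faces :: "nat set \<Rightarrow> (nat \<Rightarrow> nat) \<Rightarrow> line set \<Rightarrow> line set \<Rightarrow> face set" where
  "sub_int_faces B col L H = {f \<in> int_faces B col L. \<forall>l\<in>L. on_face col L l f \<longrightarrow> l \<in> H}"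

definition lin_indep_rows :: "('r \<Rightarrow> 'c \<Rightarrow> real) \<Rightarrow> 'r set \<Rightarrow> 'c set \<Rightarrow> bool" where
  "lin_indep_rows A S Cs \<longleftrightarrow>
     (\<forall>a :: 'r \<Rightarrow> real. (\<forall>f\<in>Cs. (\<Sum>r\<in>S. a r * A r f) = 0) \<longrightarrow> (\<forall>r\<in>S. a r = 0))"

definition mat_rank :: "('r \<Rightarrow> 'c \<Rightarrow> real) \<Rightarrow> 'r set \<Rightarrow> 'c set \<Rightarrow> nat" where
  "mat_rank A R Cs = Max {card S | S. S \<subseteq> R \<and> lin_indep_rows A S Cs}"

definition F_sub :: "nat set \<Rightarrow> (nat \<Rightarrow> nat) \<Rightarrow> line set \<Rightarrow> line set \<Rightarrow> nat" where
  "F_sub B col L H = card (sub_int_faces B col L H)"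

definition R_sub :: "nat set \<Rightarrow> (nat \<Rightarrow> nat) \<Rightarrow> line set \<Rightarrow> line set \<Rightarrow> nat" where
  "R_sub B col L H = mat_rank (eps col L) H (sub_int_faces B col L H)"

definition omega_deg :: "nat set \<Rightarrow> (nat \<Rightarrow> nat) \<Rightarrow> line set \<Rightarrow> line set \<Rightarrow> int" where
  "omega_deg B col L H = - 2 * int (card H) + int (F_sub B col L H) - int (R_sub B col L H)"

text \<open>Propagator and slices; momenta p = (p_1..p_6) as functions on colours 1..6.\<close>
definition psq :: "(nat \<Rightarrow> int) \<Rightarrow> int" where
  "psq p = (\<Sum>c=1..6. (p c)\<^sup>2)"

definition cov :: "real \<Rightarrow> (nat \<Rightarrow> int) \<Rightarrow> real" where
  "cov m p = (if (\<Sum>c=1..6. p c) = 0 then 1 else 0) / (real_of_int (psq p) + m\<^sup>2)"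

definition chi :: "real \<Rightarrow> nat \<Rightarrow> (nat \<Rightarrow> int) \<Rightarrow> real" where
  "chi M i p = (if i = 1 then (if real_of_int (psq p) \<le> M\<^sup>2 then 1 else 0)
               else (if M ^ (2 * (i - 1)) < real_of_int (psq p) \<and> real_of_int (psq p) \<le> M ^ (2 * i)
                     then 1 else 0))"

definition cov_slice :: "real \<Rightarrow> real \<Rightarrow> nat \<Rightarrow> (nat \<Rightarrow> int) \<Rightarrow> real" where
  "cov_slice M m i p = cov m p * chi M i p"

text \<open>Momentum of line l: c-component is the momentum of the {0,c}-face through l;
  P gives the (summed) internal face momenta, E the fixed external face momenta.\<close>
definition line_mom :: "nat set \<Rightarrow> (nat \<Rightarrow> nat) \<Rightarrow> line set \<Rightarrow> (face \<Rightarrow> int) \<Rightarrow> (face \<Rightarrow> int)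
                        \<Rightarrow> line \<Rightarrow> nat \<Rightarrow> int" where
  "line_mom B col L P E l c =
     (let f = face_thru col L c l in if f \<in> int_faces B col L then P f else E f)"

definition amplitude :: "real \<Rightarrow> real \<Rightarrow> nat set \<Rightarrow> (nat \<Rightarrow> nat) \<Rightarrow> line set \<Rightarrow> (face \<Rightarrow> int)
                         \<Rightarrow> (line \<Rightarrow> nat) \<Rightarrow> real" where
  "amplitude M m B col L E mu =
     (\<Sum>\<^sub>\<infinity>P\<in>{P :: face \<Rightarrow> int. \<forall>f. f \<notin> int_faces B col L \<longrightarrow> P f = 0}.
        \<Prod>l\<in>L. cov_slice M m (mu l) (line_mom B col L P E l))"

text \<open>G_i: lines of scale at least i; its connected line_comps as sets of lines
  (two lines are adjacent when they touch a common bubble).\<close>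
definition lines_ge :: "line set \<Rightarrow> (line \<Rightarrow> nat) \<Rightarrow> nat \<Rightarrow> line set" where
  "lines_ge L mu i = {l \<in> L. i \<le> mu l}"

definition line_adj :: "line set \<Rightarrow> line rel" where
  "line_adj H = {(l, l'). l \<in> H \<and> l' \<in> H \<and>
                   {bub (fst l), bub (snd l)} \<inter> {bub (fst l'), bub (snd l')} \<noteq> {}}"

definition line_comps :: "line set \<Rightarrow> line set set" where
  "line_comps H = {{l' \<in> H. (l, l') \<in> (line_adj H)\<^sup>*} | l. l \<in> H}"

end

theory Submission
  imports Defs
begin



lemma underdet:
  fixes A :: "'r \<Rightarrow> 'c \<Rightarrow> real"
  assumes "finite S" "finite T" "card S < card T"
  shows "\<exists>a. (\<forall>s\<in>S. (\<Sum>r\<in>T. a r * A r s) = 0) \<and> (\<exists>r\<in>T. a r \<noteq> 0)"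
  using assms
proof (induction S arbitrary: T A rule: finite_induct)
  case (empty T A)
  then obtain r where r: "r \<in> T" by fastforce
  show ?case by (rule exI[of _ "\<lambda>_. 1::real"]) (use r in auto)
next
  case (insert s S T A)
  show ?case
  proof (cases "\<forall>r\<in>T. A r s = 0")
    case True
    from insert.IH[of T A] insert.prems insert.hyps obtain a where
      a: "\<forall>s\<in>S. (\<Sum>r\<in>T. a r * A r s) = 0" "\<exists>r\<in>T. a r \<noteq> 0" by auto
    show ?thesis using a True by (intro exI[of _ a]) auto
  next
    case False
    then obtain r0 where r0: "r0 \<in> T" "A r0 s \<noteq> 0" by auto
    define A' where "A' r c = A r c - (A r s / A r0 s) * A r0 c" for r c
    have cT: "card S < card (T - {r0})" using insert r0 by auto
    from insert.IH[of "T - {r0}" A'] cT insert.prems obtain a' where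
      a': "\<forall>c\<in>S. (\<Sum>r\<in>T - {r0}. a' r * A' r c) = 0" "\<exists>r\<in>T - {r0}. a' r \<noteq> 0" by auto
    define a where "a r = (if r = r0 then - (\<Sum>q\<in>T - {r0}. a' q * A q s) / A r0 s else a' r)" for r
    have split: "(\<Sum>r\<in>T. a r * A r c) = a r0 * A r0 c + (\<Sum>r\<in>T - {r0}. a' r * A r c)" for c
      using r0 insert.prems by (simp add: sum.remove a_def)
    have "(\<Sum>r\<in>T. a r * A r s) = 0" using split[of s] r0 by (simp add: a_def)
    moreover have "(\<Sum>r\<in>T. a r * A r c) = 0" if "c \<in> S" for c
    proof -
      have "(\<Sum>r\<in>T - {r0}. a' r * A r c) = (\<Sum>r\<in>T - {r0}. a' r * A' r c) +
              (\<Sum>r\<in>T - {r0}. a' r * A r s) / A r0 s * A r0 c"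
      proof -
        have "(\<Sum>r\<in>T - {r0}. a' r * A r c) = (\<Sum>r\<in>T - {r0}. a' r * A' r c + a' r * A r s / A r0 s * A r0 c)"
          using r0 by (intro sum.cong) (auto simp: A'_def field_simps)
        also have "\<dots> = (\<Sum>r\<in>T - {r0}. a' r * A' r c) + (\<Sum>r\<in>T - {r0}. a' r * A r s) / A r0 s * A r0 c"
          by (simp add: sum.distrib sum_distrib_right sum_divide_distrib)
        finally show ?thesis .
      qed
      then show ?thesis using split[of c] a'(1) that by (simp add: a_def)
    qed
    moreover have "\<exists>r\<in>T. a r \<noteq> 0" using a'(2) by (auto simp: a_def)
    ultimately show ?thesis by (intro exI[of _ a]) auto
  qed
qed

definition spans :: "('r \<Rightarrow> 'c \<Rightarrow> real) \<Rightarrow> 'r set \<Rightarrow> 'r \<Rightarrow> 'c set \<Rightarrow> bool" where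
  "spans A S f Cs \<longleftrightarrow> (\<exists>w. \<forall>c\<in>Cs. A f c = (\<Sum>s\<in>S. w s * A s c))"

lemma spans_mono:
  assumes "spans A S f Cs" "S \<subseteq> S'" "finite S'"
  shows "spans A S' f Cs"
proof -
  obtain w where l: "\<forall>c\<in>Cs. A f c = (\<Sum>s\<in>S. w s * A s c)" using assms(1) unfolding spans_def by blast
  define w' where "w' s = (if s \<in> S then w s else 0)" for s
  have e: "(\<Sum>s\<in>S'. w' s * A s c) = (\<Sum>s\<in>S. w s * A s c)" for c
    using assms(2,3) by (intro sum.mono_neutral_cong_right) (auto simp: w'_def)
  show ?thesis unfolding spans_def
    by (rule exI[of _ w']) (use l e in auto)
qed

lemma spans_mem:
  assumes "f \<in> S" "finite S"
  shows "spans A S f Cs"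
proof -
  have e: "(\<Sum>s\<in>S. (if s = f then 1 else 0) * A s c) = A f c" for c
  proof -
    have "(\<Sum>s\<in>S. (if s = f then 1 else 0) * A s c) = (\<Sum>s\<in>S. if s = f then A s c else 0)"
      by (intro sum.cong) auto
    then show ?thesis using assms by simp
  qed
  show ?thesis unfolding spans_def
    by (rule exI[of _ "\<lambda>s. if s = f then 1 else 0"]) (use e in auto)
qed

lemma maximal_span:
  assumes "finite S" "lin_indep_rows A S Cs" "\<not> lin_indep_rows A (insert f S) Cs" "f \<notin> S"
  shows "spans A S f Cs"
proof -
  from assms(3) obtain a where a: "\<forall>c\<in>Cs. (\<Sum>r\<in>insert f S. a r * A r c) = 0"
    "\<exists>r\<in>insert f S. a r \<noteq> 0" unfolding lin_indep_rows_def by blast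
  have eq: "a f * A f c + (\<Sum>r\<in>S. a r * A r c) = 0" if "c \<in> Cs" for c
    using a(1) that assms(1,4) by simp
  have "a f \<noteq> 0"
  proof
    assume "a f = 0"
    then have "\<forall>c\<in>Cs. (\<Sum>r\<in>S. a r * A r c) = 0" using eq by simp
    then have "\<forall>r\<in>S. a r = 0" using assms(2) unfolding lin_indep_rows_def by blast
    then show False using a(2) \<open>a f = 0\<close> by auto
  qed
  have e: "A f c = (\<Sum>s\<in>S. (- a s / a f) * A s c)" if "c \<in> Cs" for c
  proof -
    have "(\<Sum>s\<in>S. (- a s / a f) * A s c) = - (\<Sum>s\<in>S. a s * A s c) / a f"
      by (simp add: sum_divide_distrib sum_negf)
    also have "\<dots> = A f c" using eq[OF that] \<open>a f \<noteq> 0\<close> by (simp add: field_simps)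
    finally show ?thesis by simp
  qed
  show ?thesis unfolding spans_def
    by (rule exI[of _ "\<lambda>s. - a s / a f"]) (use e in auto)
qed

lemma rank_le:
  assumes "finite T" "finite S" "lin_indep_rows A T C"
    and sp: "\<forall>f\<in>C. spans (\<lambda>f r. A r f) S f T"
  shows "card T \<le> card S"
proof (rule ccontr)
  assume "\<not> card T \<le> card S"
  then have lt: "card S < card T" by simp
  obtain a where a: "\<forall>s\<in>S. (\<Sum>r\<in>T. a r * A r s) = 0" "\<exists>r\<in>T. a r \<noteq> 0"
    using underdet[OF assms(2,1) lt, of A] by blast
  have "(\<Sum>r\<in>T. a r * A r f) = 0" if "f \<in> C" for f
  proof -
    have "spans (\<lambda>f r. A r f) S f T" using sp that by blast
    then obtain w where l: "\<forall>r\<in>T. A r f = (\<Sum>s\<in>S. w s * A r s)"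
      unfolding spans_def by auto
    have "(\<Sum>r\<in>T. a r * A r f) = (\<Sum>r\<in>T. \<Sum>s\<in>S. a r * (w s * A r s))"
      using l by (simp add: sum_distrib_left)
    also have "\<dots> = (\<Sum>s\<in>S. \<Sum>r\<in>T. a r * (w s * A r s))"
      by (rule sum.swap)
    also have "\<dots> = (\<Sum>s\<in>S. w s * (\<Sum>r\<in>T. a r * A r s))"
      by (simp add: sum_distrib_left mult.left_commute)
    also have "\<dots> = 0" using a(1) by simp
    finally show ?thesis .
  qed
  moreover have "(\<forall>f\<in>C. (\<Sum>r\<in>T. a r * A r f) = 0) \<longrightarrow> (\<forall>r\<in>T. a r = 0)"
    using assms(3) unfolding lin_indep_rows_def by (rule spec)
  ultimately show False using a(2) by auto
qed

lemma nested_basis: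
  fixes F :: "nat \<Rightarrow> 'c set" and A :: "'c \<Rightarrow> 'r \<Rightarrow> real"
  assumes fin: "\<And>i. finite (F i)" and anti: "\<And>i. F (Suc i) \<subseteq> F i"
    and emp: "\<And>i. i > N \<Longrightarrow> F i = {}"
  shows "\<exists>S \<subseteq> F 0. lin_indep_rows A S Rs \<and> (\<forall>i. \<forall>f\<in>F i. spans A (S \<inter> F i) f Rs)"
proof -
  have P: "\<exists>S \<subseteq> F k. lin_indep_rows A S Rs \<and> (\<forall>i\<ge>k. \<forall>f\<in>F i. spans A (S \<inter> F i) f Rs)"
    if "k \<le> Suc N" for k
    using that
  proof (induction k rule: inc_induct)
    case base
    show ?case
      by (rule exI[of _ "{}"]) (auto simp: emp lin_indep_rows_def)
  next
    case (step n)
    then obtain S where S: "S \<subseteq> F (Suc n)" "lin_indep_rows A S Rs"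
      "\<forall>i\<ge>Suc n. \<forall>f\<in>F i. spans A (S \<inter> F i) f Rs" by blast
    define Q where "Q = {S'. S \<subseteq> S' \<and> S' \<subseteq> F n \<and> lin_indep_rows A S' Rs}"
    have "Q \<subseteq> Pow (F n)" unfolding Q_def by auto
    then have Qfin: "finite Q" using fin[of n] by (simp add: finite_subset)
    have "S \<in> Q" using S anti[of n] unfolding Q_def by auto
    have "Max (card ` Q) \<in> card ` Q" using Qfin \<open>S \<in> Q\<close> by (intro Max_in) auto
    then obtain S' where S': "S' \<in> Q" "card S' = Max (card ` Q)" by auto
    have S'max: "card X \<le> card S'" if "X \<in> Q" for X using S'(2) Qfin that by simp
    have S'F: "S \<subseteq> S'" "S' \<subseteq> F n" "lin_indep_rows A S' Rs" using S'(1) Q_def by auto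
    have finS': "finite S'" using S'F(2) fin rev_finite_subset by blast
    show ?case
    proof (intro exI[of _ S'] conjI allI impI ballI)
      show "S' \<subseteq> F n" "lin_indep_rows A S' Rs" using S'F by auto
      fix i f assume i: "n \<le> i" and f: "f \<in> F i"
      show "spans A (S' \<inter> F i) f Rs"
      proof (cases "i = n")
        case True
        have eq: "S' \<inter> F i = S'" using S'F True by auto
        show ?thesis
        proof (cases "f \<in> S'")
          case True
          then show ?thesis unfolding eq by (rule spans_mem[OF _ finS'])
        next
          case False
          have "\<not> lin_indep_rows A (insert f S') Rs"
          proof
            assume ind: "lin_indep_rows A (insert f S') Rs"
            have "insert f S' \<in> Q" using ind S'F f True unfolding Q_def by auto
            then have "card (insert f S') \<le> card S'" by (rule S'max)
            then show False using False finS' by simp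
          qed
          then show ?thesis using maximal_span[OF finS' S'F(3) _ False] eq by simp
        qed
      next
        case False
        then have "Suc n \<le> i" using i by simp
        then have "spans A (S \<inter> F i) f Rs" using S(3) f by blast
        then show ?thesis
          by (rule spans_mono) (use S'F finS' in auto)
      qed
    qed
  qed
  show ?thesis using P[of 0] by auto
qed




lemma finite_L:
  assumes "feyn_graph B col L" shows "finite L"
proof -
  have "graph_nodes B \<subseteq> B \<times> UNIV" unfolding graph_nodes_def by auto
  moreover have "finite (B \<times> (UNIV :: (bool \<times> bool) set))" using assms unfolding feyn_graph_def by simp
  ultimately have fg: "finite (graph_nodes B)" by (rule finite_subset)
  have "L \<subseteq> graph_nodes B \<times> graph_nodes B" using assms unfolding feyn_graph_def by auto
  then show ?thesis using fg by (meson finite_SigmaI finite_subset)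
qed

lemma cpart_inv[simp]: "cpart col c (cpart col c x) = x"
  by (cases x) (auto simp: cpart_def)

lemma bub_cpart[simp]: "bub (cpart col c x) = bub x"
  by (cases x) (auto simp: cpart_def bub_def)

lemma cpart_pair: "(cpart col c x, x) \<in> {(x, cpart col c x) |x. True}"
  by (rule CollectI, rule exI[of _ "cpart col c x"]) simp

lemma sym_face_rel: "sym (face_rel col L c)"
proof (rule symI)
  fix x y assume "(x, y) \<in> face_rel col L c"
  then consider "y = cpart col c x" | "(x, y) \<in> L" | "(y, x) \<in> L"
    unfolding face_rel_def by auto
  then show "(y, x) \<in> face_rel col L c"
  proof cases
    case 1 then show ?thesis using cpart_pair[of col c x] unfolding face_rel_def by simp
  qed (auto simp: face_rel_def)
qed

lemma face_comp_eq:
  assumes "y \<in> face_comp col L c x"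
  shows "face_comp col L c y = face_comp col L c x"
proof -
  have s: "sym ((face_rel col L c)\<^sup>*)" by (rule sym_rtrancl[OF sym_face_rel])
  have xy: "(x, y) \<in> (face_rel col L c)\<^sup>*" using assms face_comp_def by fastforce
  then have yx: "(y, x) \<in> (face_rel col L c)\<^sup>*" using s by (meson symD)
  show ?thesis unfolding face_comp_def using xy yx by (auto intro: rtrancl_trans)
qed

lemma face_comp_self: "x \<in> face_comp col L c x"
  unfolding face_comp_def by simp

lemma on_face_iff: "on_face col L l f \<longleftrightarrow> face_comp col L (fst f) (fst l) = snd f"
  unfolding on_face_def face_thru_def by (cases f) auto

definition LF :: "(nat \<Rightarrow> nat) \<Rightarrow> line set \<Rightarrow> face \<Rightarrow> line set" where
  "LF col L f = {l \<in> L. on_face col L l f}"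

lemma IF_line:
  assumes "f \<in> int_faces B col L"
  shows "\<exists>l\<in>L. on_face col L l f"
proof -
  from assms obtain c x where f: "f = (c, face_comp col L c x)" "c \<in> {1..6}" "x \<in> graph_nodes B"
    and m: "\<forall>y\<in>snd f. matched L y"
    unfolding int_faces_def all_faces_def by auto
  have "matched L x" using m f face_comp_self by fastforce
  then obtain l where l: "l \<in> L" "fst l = x \<or> snd l = x" unfolding matched_def by auto
  have "fst l \<in> face_comp col L c x"
  proof (cases "fst l = x")
    case True then show ?thesis using face_comp_self by metis
  next
    case False
    then have "(x, fst l) \<in> face_rel col L c" using l unfolding face_rel_def
      by (cases l) auto
    then show ?thesis unfolding face_comp_def by auto
  qed
  then have "face_comp col L c (fst l) = face_comp col L c x" by (rule face_comp_eq)
  then show ?thesis using l f by (auto simp: on_face_iff)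
qed

lemma IF_sub:
  "int_faces B col L \<subseteq> (\<lambda>(c, l). face_thru col L c l) ` ({1..6} \<times> L)"
proof
  fix f assume f: "f \<in> int_faces B col L"
  then obtain l where l: "l \<in> L" "on_face col L l f" using IF_line by blast
  have c: "fst f \<in> {1..6}" using f unfolding int_faces_def all_faces_def by auto
  have "f = face_thru col L (fst f) l" using l(2) unfolding on_face_def by simp
  then show "f \<in> (\<lambda>(c, l). face_thru col L c l) ` ({1..6} \<times> L)" using c l(1) by force
qed

lemma IF_fin:
  assumes "finite L" shows "finite (int_faces B col L)"
  using IF_sub assms by (meson finite_SigmaI finite_atLeastAtMost finite_imageI finite_subset)

lemma IF_card:
  assumes "finite L" shows "card (int_faces B col L) \<le> 6 * card L"
proof -
  have "card (int_faces B col L) \<le> card ((\<lambda>(c, l). face_thru col L c l) ` ({1..6::nat} \<times> L))"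
    using IF_sub assms by (intro card_mono) auto
  also have "\<dots> \<le> card ({1..6::nat} \<times> L)" by (rule card_image_le) (use assms in auto)
  also have "\<dots> = 6 * card L" by (simp add: card_cartesian_product)
  finally show ?thesis .
qed

lemma face_lines_connected:
  assumes l0: "l0 \<in> LF col L f" and H: "LF col L f \<subseteq> H" and l: "l \<in> LF col L f"
  shows "(l0, l) \<in> (line_adj H)\<^sup>*"
proof -
  define c where "c = fst f"
  define R where "R = face_rel col L c"
  have sf: "snd f = face_comp col L c (fst l0)" using l0 unfolding LF_def c_def by (auto simp: on_face_iff)
  have onf: "l' \<in> LF col L f" if "l' \<in> L" "fst l' \<in> face_comp col L c (fst l0)" for l'
    using that face_comp_eq[OF that(2)] sf unfolding LF_def c_def by (auto simp: on_face_iff)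
  have l0H: "l0 \<in> H" using l0 H by auto
  have claim: "\<exists>l'\<in>H. bub z \<in> {bub (fst l'), bub (snd l')} \<and> (l0, l') \<in> (line_adj H)\<^sup>*"
    if "(fst l0, z) \<in> R\<^sup>*" for z
    using that
  proof (induction rule: rtrancl_induct)
    case base
    then show ?case using l0H by auto
  next
    case (step y z)
    from step.IH obtain l' where l': "l' \<in> H" "bub y \<in> {bub (fst l'), bub (snd l')}"
      "(l0, l') \<in> (line_adj H)\<^sup>*" by blast
    have ycomp: "y \<in> face_comp col L c (fst l0)" using step.hyps(1) unfolding face_comp_def R_def by simp
    have zcomp: "z \<in> face_comp col L c (fst l0)"
      using step.hyps unfolding face_comp_def R_def by simp
    from step.hyps(2) consider "z = cpart col c y" | "(y, z) \<in> L" | "(z, y) \<in> L"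
      unfolding R_def face_rel_def by auto
    then show ?case
    proof cases
      case 1 then show ?thesis using l' by auto
    next
      case 2
      define l'' where "l'' = (y, z)"
      have "l'' \<in> LF col L f" using onf[of l''] 2 ycomp by (simp add: l''_def)
      then have l''H: "l'' \<in> H" using H by auto
      have "(l', l'') \<in> line_adj H" using l'(1,2) l''H unfolding line_adj_def l''_def by auto
      then have "(l0, l'') \<in> (line_adj H)\<^sup>*" using l'(3) by (rule rtrancl_into_rtrancl[rotated])
      then show ?thesis using l''H by (intro bexI[of _ l'']) (auto simp: l''_def)
    next
      case 3
      define l'' where "l'' = (z, y)"
      have "l'' \<in> LF col L f" using onf[of l''] 3 zcomp by (simp add: l''_def)
      then have l''H: "l'' \<in> H" using H by auto
      have "(l', l'') \<in> line_adj H" using l'(1,2) l''H unfolding line_adj_def l''_def by auto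
      then have "(l0, l'') \<in> (line_adj H)\<^sup>*" using l'(3) by (rule rtrancl_into_rtrancl[rotated])
      then show ?thesis using l''H by (intro bexI[of _ l'']) (auto simp: l''_def)
    qed
  qed
  have "face_comp col L c (fst l) = snd f" using l unfolding LF_def c_def by (simp add: on_face_iff)
  then have "fst l \<in> snd f" using face_comp_self[of "fst l" col L c] by simp
  then have "(fst l0, fst l) \<in> R\<^sup>*" using sf unfolding face_comp_def R_def by simp
  from claim[OF this] obtain l' where l': "l' \<in> H" "bub (fst l) \<in> {bub (fst l'), bub (snd l')}"
      "(l0, l') \<in> (line_adj H)\<^sup>*" by blast
  have "l \<in> H" using l H by auto
  then have "(l', l) \<in> line_adj H" using l' unfolding line_adj_def by auto
  then show ?thesis using l'(3) by (rule rtrancl_into_rtrancl[rotated])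
qed




definition lcomp :: "line set \<Rightarrow> line \<Rightarrow> line set" where
  "lcomp H l = {l' \<in> H. (l, l') \<in> (line_adj H)\<^sup>*}"

lemma line_comps_comp: "line_comps H = lcomp H ` H"
  unfolding line_comps_def lcomp_def by blast

lemma sym_adj: "sym (line_adj H)"
  unfolding sym_def line_adj_def by auto

lemma lcomp_eq:
  assumes "l' \<in> lcomp H l" shows "lcomp H l' = lcomp H l"
proof -
  have s: "sym ((line_adj H)\<^sup>*)" by (rule sym_rtrancl[OF sym_adj])
  have xy: "(l, l') \<in> (line_adj H)\<^sup>*" using assms lcomp_def by fastforce
  then have yx: "(l', l) \<in> (line_adj H)\<^sup>*" using s by (meson symD)
  show ?thesis unfolding lcomp_def using xy yx by (auto intro: rtrancl_trans)
qed

lemma lcomp_self: "l \<in> H \<Longrightarrow> l \<in> lcomp H l"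
  unfolding lcomp_def by simp

lemma lcomp_sub: "lcomp H l \<subseteq> H"
  unfolding lcomp_def by auto

lemma comps_disj:
  assumes "X \<in> line_comps H" "Y \<in> line_comps H" "X \<noteq> Y"
  shows "X \<inter> Y = {}"
proof (rule ccontr)
  assume "X \<inter> Y \<noteq> {}"
  then obtain z where z: "z \<in> X" "z \<in> Y" by blast
  obtain a b where "X = lcomp H a" "Y = lcomp H b" using assms(1,2) line_comps_comp by auto
  then have "X = lcomp H z" "Y = lcomp H z" using lcomp_eq z by metis+
  then show False using assms(3) by simp
qed

lemma Union_comps: "\<Union>(line_comps H) = H"
  unfolding line_comps_comp using lcomp_self lcomp_sub by blast

lemma comps_fin: "finite H \<Longrightarrow> finite (line_comps H)"
  unfolding line_comps_comp by simp

lemma comps_sub: "X \<in> line_comps H \<Longrightarrow> X \<subseteq> H"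
  unfolding line_comps_comp using lcomp_sub by blast

lemma sum_card_comps:
  assumes "finite H" shows "(\<Sum>X\<in>line_comps H. card X) = card H"
proof -
  have "card (\<Union>(line_comps H)) = (\<Sum>X\<in>line_comps H. card X)"
  proof (rule card_Union_disjoint)
    show "pairwise disjnt (line_comps H)"
      unfolding pairwise_def disjnt_def using comps_disj by blast
    show "\<And>A. A \<in> line_comps H \<Longrightarrow> finite A"
      using assms comps_sub finite_subset by blast
  qed
  then show ?thesis using Union_comps by simp
qed

definition ifc :: "(nat \<Rightarrow> nat) \<Rightarrow> line set \<Rightarrow> (line \<Rightarrow> nat) \<Rightarrow> face \<Rightarrow> nat" where
  "ifc col L mu f = Min (mu ` LF col L f)"

lemma LF_ne: "f \<in> int_faces B col L \<Longrightarrow> LF col L f \<noteq> {}"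
  using IF_line unfolding LF_def by blast

lemma LF_fin: "finite L \<Longrightarrow> finite (LF col L f)"
  unfolding LF_def by simp

lemma ifc_ge_iff:
  assumes "finite L" "f \<in> int_faces B col L"
  shows "i \<le> ifc col L mu f \<longleftrightarrow> (\<forall>l\<in>LF col L f. i \<le> mu l)"
  unfolding ifc_def using LF_ne[OF assms(2)] LF_fin[OF assms(1)] by simp

lemma ifc_attained:
  assumes "finite L" "f \<in> int_faces B col L"
  shows "\<exists>l\<in>LF col L f. mu l = ifc col L mu f"
proof -
  have "Min (mu ` LF col L f) \<in> mu ` LF col L f"
    using LF_ne[OF assms(2)] LF_fin[OF assms(1)] by (intro Min_in) auto
  then show ?thesis unfolding ifc_def by auto
qed

definition Fi :: "nat set \<Rightarrow> (nat \<Rightarrow> nat) \<Rightarrow> line set \<Rightarrow> (line \<Rightarrow> nat) \<Rightarrow> nat \<Rightarrow> face set" where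
  "Fi B col L mu i = {f \<in> int_faces B col L. i \<le> ifc col L mu f}"

lemma SIF_in_Fi:
  assumes "finite L" "X \<in> line_comps (lines_ge L mu i)"
  shows "sub_int_faces B col L X \<subseteq> Fi B col L mu i"
proof
  fix f assume f: "f \<in> sub_int_faces B col L X"
  then have fI: "f \<in> int_faces B col L" unfolding sub_int_faces_def by auto
  have "\<forall>l\<in>LF col L f. i \<le> mu l"
    using f comps_sub[OF assms(2)] unfolding sub_int_faces_def LF_def lines_ge_def by auto
  then show "f \<in> Fi B col L mu i" using ifc_ge_iff[OF assms(1) fI] fI unfolding Fi_def by simp
qed

lemma KF:
  assumes "finite L"
  shows "card (Fi B col L mu i) \<le> (\<Sum>X\<in>line_comps (lines_ge L mu i). F_sub B col L X)"
proof -
  define G where "G = lines_ge L mu i"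
  have finG: "finite G" using assms unfolding G_def lines_ge_def by simp
  have sub: "Fi B col L mu i \<subseteq> (\<Union>X\<in>line_comps G. sub_int_faces B col L X)"
  proof
    fix f assume f: "f \<in> Fi B col L mu i"
    then have fI: "f \<in> int_faces B col L" unfolding Fi_def by simp
    have LFG: "LF col L f \<subseteq> G"
      using f ifc_ge_iff[OF assms fI] unfolding Fi_def G_def lines_ge_def LF_def by auto
    obtain l0 where l0: "l0 \<in> LF col L f" using LF_ne[OF fI] by blast
    have l0G: "l0 \<in> G" using l0 LFG by auto
    have "f \<in> sub_int_faces B col L (lcomp G l0)"
      unfolding sub_int_faces_def
    proof (intro CollectI conjI ballI impI)
      show "f \<in> int_faces B col L" by (rule fI)
      fix l assume "l \<in> L" "on_face col L l f"
      then have l: "l \<in> LF col L f" unfolding LF_def by simp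
      then show "l \<in> lcomp G l0" using face_lines_connected[OF l0 LFG l] LFG unfolding lcomp_def by auto
    qed
    moreover have "lcomp G l0 \<in> line_comps G" using l0G line_comps_comp by auto
    ultimately show "f \<in> (\<Union>X\<in>line_comps G. sub_int_faces B col L X)" by blast
  qed
  have "card (Fi B col L mu i) \<le> card (\<Union>X\<in>line_comps G. sub_int_faces B col L X)"
    using sub IF_fin[OF assms, of B col] comps_fin[OF finG]
    by (intro card_mono) (auto simp: sub_int_faces_def intro: finite_subset)
  also have "\<dots> \<le> (\<Sum>X\<in>line_comps G. card (sub_int_faces B col L X))"
    by (rule card_UN_le) (rule comps_fin[OF finG])
  finally show ?thesis unfolding F_sub_def G_def .
qed

lemma mat_rank_witness:
  assumes "finite H"
  shows "\<exists>T \<subseteq> H. lin_indep_rows A T Cs \<and> card T = mat_rank A H Cs"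
proof -
  have eq: "{card S | S. S \<subseteq> H \<and> lin_indep_rows A S Cs} = card ` {S. S \<subseteq> H \<and> lin_indep_rows A S Cs}"
    by blast
  have "finite {S. S \<subseteq> H \<and> lin_indep_rows A S Cs}"
  proof (rule finite_subset)
    show "{S. S \<subseteq> H \<and> lin_indep_rows A S Cs} \<subseteq> Pow H" by blast
    show "finite (Pow H)" using assms by simp
  qed
  then have fin: "finite {card S | S. S \<subseteq> H \<and> lin_indep_rows A S Cs}"
    unfolding eq by simp
  have "{} \<subseteq> H \<and> lin_indep_rows A {} Cs" by (simp add: lin_indep_rows_def)
  then have "card {} \<in> {card S | S. S \<subseteq> H \<and> lin_indep_rows A S Cs}"
    by (intro CollectI exI[where x="{}"]) simp
  then have "Max {card S | S. S \<subseteq> H \<and> lin_indep_rows A S Cs} \<in> {card S | S. S \<subseteq> H \<and> lin_indep_rows A S Cs}"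
    using fin by (intro Max_in) auto
  then show ?thesis unfolding mat_rank_def by auto
qed

lemma KR:
  assumes finL: "finite L" and SI: "S \<subseteq> int_faces B col L"
    and sp: "\<forall>f\<in>Fi B col L mu i. spans (\<lambda>f l. eps col L l f) (S \<inter> Fi B col L mu i) f L"
  shows "(\<Sum>X\<in>line_comps (lines_ge L mu i). R_sub B col L X) \<le> card (S \<inter> Fi B col L mu i)"
proof -
  define G where "G = lines_ge L mu i"
  define Cs where "Cs = Fi B col L mu i"
  have GL: "G \<subseteq> L" unfolding G_def lines_ge_def by auto
  have finG: "finite G" using finL GL finite_subset by blast
  have "\<forall>X\<in>line_comps G. \<exists>T \<subseteq> X. lin_indep_rows (eps col L) T (sub_int_faces B col L X)
          \<and> card T = R_sub B col L X"
    unfolding R_sub_def using mat_rank_witness finG comps_sub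
    by (meson finite_subset)
  then obtain Tf where Tf: "\<And>X. X \<in> line_comps G \<Longrightarrow> Tf X \<subseteq> X \<and>
      lin_indep_rows (eps col L) (Tf X) (sub_int_faces B col L X) \<and> card (Tf X) = R_sub B col L X"
    by metis
  define T where "T = (\<Union>X\<in>line_comps G. Tf X)"
  have finT: "finite T" unfolding T_def using comps_fin[OF finG] Tf comps_sub finG
    by (meson finite_UN_I finite_subset)
  have TL: "T \<subseteq> L" unfolding T_def using Tf comps_sub GL by blast
  have cardT: "card T = (\<Sum>X\<in>line_comps G. R_sub B col L X)"
  proof -
    have "card T = (\<Sum>X\<in>line_comps G. card (Tf X))" unfolding T_def
    proof (rule card_UN_disjoint)
      show "finite (line_comps G)" by (rule comps_fin[OF finG])
      show "\<forall>X\<in>line_comps G. finite (Tf X)" using Tf comps_sub finG by (meson finite_subset)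
      show "\<forall>X\<in>line_comps G. \<forall>Y\<in>line_comps G. X \<noteq> Y \<longrightarrow> Tf X \<inter> Tf Y = {}"
        using Tf comps_disj by blast
    qed
    then show ?thesis using Tf by simp
  qed
  have indT: "lin_indep_rows (eps col L) T Cs"
    unfolding lin_indep_rows_def
  proof (intro allI impI ballI)
    fix a :: "line \<Rightarrow> real" and r
    assume a: "\<forall>f\<in>Cs. (\<Sum>r\<in>T. a r * eps col L r f) = 0" and r: "r \<in> T"
    then obtain X where X: "X \<in> line_comps G" "r \<in> Tf X" unfolding T_def by blast
    have "\<forall>f\<in>sub_int_faces B col L X. (\<Sum>q\<in>Tf X. a q * eps col L q f) = 0"
    proof
      fix f assume f: "f \<in> sub_int_faces B col L X"
      have fC: "f \<in> Cs" using SIF_in_Fi[OF finL] X(1) f unfolding Cs_def G_def by blast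
      have "(\<Sum>q\<in>T. a q * eps col L q f) = (\<Sum>q\<in>Tf X. a q * eps col L q f)"
      proof (rule sum.mono_neutral_right[OF finT])
        show "Tf X \<subseteq> T" unfolding T_def using X by blast
        show "\<forall>q\<in>T - Tf X. a q * eps col L q f = 0"
        proof
          fix q assume q: "q \<in> T - Tf X"
          then obtain Y where Y: "Y \<in> line_comps G" "q \<in> Tf Y" unfolding T_def by blast
          have "X \<noteq> Y" using q Y by auto
          then have "q \<notin> X" using Y Tf comps_disj[OF X(1) Y(1)] by blast
          moreover have "q \<in> L" using q TL by auto
          ultimately have "\<not> on_face col L q f" using f unfolding sub_int_faces_def by blast
          then show "a q * eps col L q f = 0" unfolding eps_def by simp
        qed
      qed
      then show "(\<Sum>q\<in>Tf X. a q * eps col L q f) = 0" using a fC by simp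
    qed
    then show "a r = 0" using Tf[OF X(1)] X(2) unfolding lin_indep_rows_def by blast
  qed
  have "card T \<le> card (S \<inter> Cs)"
  proof (rule rank_le[OF finT _ indT])
    show "finite (S \<inter> Cs)" using SI IF_fin[OF finL] finite_subset by blast
    show "\<forall>f\<in>Cs. spans (\<lambda>f r. eps col L r f) (S \<inter> Cs) f T"
      using sp TL unfolding Cs_def spans_def by blast
  qed
  then show ?thesis using cardT unfolding G_def Cs_def by simp
qed




lemma psq_nonneg: "0 \<le> psq p"
  unfolding psq_def by (intro sum_nonneg) auto

lemma psq_ge: "c \<in> {1..6} \<Longrightarrow> (p c)\<^sup>2 \<le> psq p"
  unfolding psq_def by (rule member_le_sum) auto

lemma cov_nonneg: "m > 0 \<Longrightarrow> 0 \<le> cov m p"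
  unfolding cov_def using psq_nonneg[of p] by (auto intro!: divide_nonneg_pos add_nonneg_pos)

lemma cov_le: "m > 0 \<Longrightarrow> cov m p \<le> 1 / (real_of_int (psq p) + m\<^sup>2)"
  unfolding cov_def using psq_nonneg[of p]
  by (auto intro!: divide_right_mono add_nonneg_pos)

lemma chi_cases: "chi M k p = 0 \<or> chi M k p = 1"
  unfolding chi_def by auto

lemma cs_bound:
  fixes M m :: real
  assumes M: "M > 1" and m: "m > 0" and k: "k \<ge> 1"
  shows "0 \<le> cov_slice M m k p \<and> cov_slice M m k p \<le> M\<^sup>2 * (1 + 1 / m\<^sup>2) / M ^ (2 * k)"
proof -
  define q where "q = real_of_int (psq p)"
  have q0: "0 \<le> q" unfolding q_def using psq_nonneg[of p] by simp
  have c0: "0 \<le> cov m p" using cov_nonneg[OF m] .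
  have cle: "cov m p \<le> 1 / (q + m\<^sup>2)" using cov_le[OF m] unfolding q_def .
  have Mk: "M ^ (2 * k) > 0" using M by simp
  show ?thesis
  proof (cases "chi M k p = 0")
    case True
    then show ?thesis unfolding cov_slice_def using M m by (auto intro!: divide_nonneg_pos)
  next
    case False
    then have ch: "chi M k p = 1" using chi_cases by blast
    have "cov m p \<le> M\<^sup>2 * (1 + 1 / m\<^sup>2) / M ^ (2 * k)"
    proof (cases "k = 1")
      case True
      have "cov m p \<le> 1 / m\<^sup>2" using cle q0 m
        by (meson add_nonneg_pos dual_order.trans frac_le le_add_same_cancel2 order_refl
            zero_le_one zero_less_power)
      also have "\<dots> \<le> 1 + 1 / m\<^sup>2" by simp
      also have "\<dots> = M\<^sup>2 * (1 + 1 / m\<^sup>2) / M ^ (2 * k)" using True M by (simp add: power2_eq_square)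
      finally show ?thesis .
    next
      case False
      then have "M ^ (2 * (k - 1)) < q" using ch unfolding chi_def q_def by (auto split: if_splits)
      then have qb: "M ^ (2 * k) / M\<^sup>2 < q"
        using k M by (simp add: power_diff[symmetric] diff_mult_distrib2 power2_eq_square[symmetric])
      have pos: "0 < M ^ (2 * k) / M\<^sup>2" using M by simp
      have h1: "M ^ (2 * k) / M\<^sup>2 \<le> q + m\<^sup>2" using qb by (smt (verit) zero_le_power2)
      have "0 < q + m\<^sup>2" using q0 m by (smt (verit) zero_less_power)
      then have h2: "0 < (q + m\<^sup>2) * (M ^ (2 * k) / M\<^sup>2)" using pos by (rule mult_pos_pos)
      have "cov m p \<le> 1 / (q + m\<^sup>2)" by (rule cle)
      also have "\<dots> \<le> 1 / (M ^ (2 * k) / M\<^sup>2)"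
        by (rule divide_left_mono[OF h1]) (use h2 in auto)
      also have "\<dots> = M\<^sup>2 / M ^ (2 * k)" by simp
      also have "\<dots> \<le> M\<^sup>2 * (1 + 1 / m\<^sup>2) / M ^ (2 * k)"
      proof (rule divide_right_mono)
        have "0 \<le> M\<^sup>2 * (1 / m\<^sup>2)" by simp
        then show "M\<^sup>2 \<le> M\<^sup>2 * (1 + 1 / m\<^sup>2)" by (simp add: distrib_left)
      qed (use Mk in auto)
      finally show ?thesis .
    qed
    then show ?thesis unfolding cov_slice_def using ch c0 by simp
  qed
qed

lemma cs_nonzero:
  fixes M m :: real
  assumes M: "M > 1" and k: "k \<ge> 1" and nz: "cov_slice M m k p \<noteq> 0"
  shows "(\<Sum>c=1..6. p c) = 0 \<and> real_of_int (psq p) \<le> M ^ (2 * k)"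
proof -
  have ch: "chi M k p \<noteq> 0" and cv: "cov m p \<noteq> 0" using nz unfolding cov_slice_def by auto
  have "real_of_int (psq p) \<le> M ^ (2 * k)"
    using ch k unfolding chi_def by (auto split: if_splits simp: power2_eq_square)
  moreover have "(\<Sum>c=1..6. p c) = 0" using cv unfolding cov_def by (auto split: if_splits)
  ultimately show ?thesis by simp
qed

definition Adm :: "real \<Rightarrow> nat set \<Rightarrow> (nat \<Rightarrow> nat) \<Rightarrow> line set \<Rightarrow> (face \<Rightarrow> int) \<Rightarrow> (line \<Rightarrow> nat)
   \<Rightarrow> (face \<Rightarrow> int) set" where
  "Adm M B col L E mu = {P. (\<forall>f. f \<notin> int_faces B col L \<longrightarrow> P f = 0) \<and>
      (\<forall>f\<in>int_faces B col L. real_of_int \<bar>P f\<bar> \<le> M ^ ifc col L mu f) \<and>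
      (\<forall>l\<in>L. (\<Sum>c=1..6. line_mom B col L P E l c) = 0)}"

lemma term_adm:
  fixes M m :: real
  assumes M: "M > 1" and finL: "finite L" and mu: "\<forall>l\<in>L. 1 \<le> mu l"
    and P: "\<forall>f. f \<notin> int_faces B col L \<longrightarrow> P f = 0"
    and nz: "(\<Prod>l\<in>L. cov_slice M m (mu l) (line_mom B col L P E l)) \<noteq> 0"
  shows "P \<in> Adm M B col L E mu"
proof -
  have nzl: "cov_slice M m (mu l) (line_mom B col L P E l) \<noteq> 0" if "l \<in> L" for l
    using nz that finL by auto
  have cons: "(\<Sum>c=1..6. line_mom B col L P E l c) = 0
    \<and> real_of_int (psq (line_mom B col L P E l)) \<le> M ^ (2 * mu l)" if "l \<in> L" for l
    using cs_nonzero[OF M _ nzl[OF that]] mu that by blast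
  have bd: "real_of_int \<bar>P f\<bar> \<le> M ^ ifc col L mu f" if f: "f \<in> int_faces B col L" for f
  proof -
    obtain l where l: "l \<in> LF col L f" "mu l = ifc col L mu f" using ifc_attained[OF finL f] by blast
    have lL: "l \<in> L" and on: "on_face col L l f" using l unfolding LF_def by auto
    have c: "fst f \<in> {1..6}" using f unfolding int_faces_def all_faces_def by auto
    have "line_mom B col L P E l (fst f) = P f"
      using on f unfolding line_mom_def on_face_def by (simp add: Let_def)
    then have "(P f)\<^sup>2 \<le> psq (line_mom B col L P E l)" using psq_ge[OF c, of "line_mom B col L P E l"] by simp
    then have "real_of_int ((P f)\<^sup>2) \<le> M ^ (2 * mu l)" using cons[OF lL] by linarith
    then have "(real_of_int (P f))\<^sup>2 \<le> (M ^ mu l)\<^sup>2" by (simp add: power_mult[symmetric] mult.commute)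
    then have "\<bar>real_of_int (P f)\<bar> \<le> \<bar>M ^ mu l\<bar>" using abs_le_square_iff by blast
    then show ?thesis using M l(2) by simp
  qed
  show ?thesis unfolding Adm_def using P bd cons by blast
qed

lemma constraint_diff:
  assumes SI: "S \<subseteq> int_faces B col L" and finS: "finite S"
    and agree: "\<forall>f\<in>int_faces B col L - S. P f = P' f"
  shows "(\<Sum>c=1..6. line_mom B col L P E l c) - (\<Sum>c=1..6. line_mom B col L P' E l c)
       = (\<Sum>f\<in>S. if on_face col L l f then P f - P' f else 0)"
proof -
  define g where "g c = face_thru col L c l" for c
  define D where "D f = P f - P' f" for f
  have inj: "inj_on g {c\<in>{1..6}. g c \<in> S}" unfolding inj_on_def g_def face_thru_def by auto
  have "(\<Sum>c=1..6. line_mom B col L P E l c) - (\<Sum>c=1..6. line_mom B col L P' E l c)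
      = (\<Sum>c=1..6. line_mom B col L P E l c - line_mom B col L P' E l c)"
    by (simp add: sum_subtractf)
  also have "\<dots> = (\<Sum>c\<in>{1..6}. if g c \<in> S then D (g c) else 0)"
  proof (rule sum.cong[OF refl])
    fix c
    show "line_mom B col L P E l c - line_mom B col L P' E l c = (if g c \<in> S then D (g c) else 0)"
      using SI agree unfolding line_mom_def g_def D_def by (auto simp: Let_def)
  qed
  also have "\<dots> = (\<Sum>c\<in>{c\<in>{1..6}. g c \<in> S}. D (g c))"
    by (rule sum.inter_filter[symmetric]) simp
  also have "\<dots> = (\<Sum>f\<in>g ` {c\<in>{1..6}. g c \<in> S}. D f)"
    by (subst sum.reindex[OF inj]) (simp add: comp_def)
  also have "g ` {c\<in>{1..6}. g c \<in> S} = {f\<in>S. on_face col L l f}"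
  proof (intro equalityI subsetI)
    fix f assume "f \<in> g ` {c\<in>{1..6}. g c \<in> S}"
    then obtain c where "f = g c" "g c \<in> S" by auto
    then show "f \<in> {f\<in>S. on_face col L l f}" unfolding g_def on_face_def face_thru_def by auto
  next
    fix f assume f: "f \<in> {f\<in>S. on_face col L l f}"
    then have "fst f \<in> {1..6}" using SI unfolding int_faces_def all_faces_def by auto
    moreover have "g (fst f) = f" using f unfolding g_def on_face_def by simp
    ultimately show "f \<in> g ` {c\<in>{1..6}. g c \<in> S}" using f by (metis (mono_tags, lifting) image_eqI mem_Collect_eq)
  qed
  also have "(\<Sum>f\<in>{f\<in>S. on_face col L l f}. D f) = (\<Sum>f\<in>S. if on_face col L l f then P f - P' f else 0)"
    unfolding D_def by (rule sum.inter_filter) (rule finS)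
  finally show ?thesis .
qed




lemma adm_inj:
  assumes finL: "finite L" and SI: "S \<subseteq> int_faces B col L"
    and ind: "lin_indep_rows (\<lambda>f r. eps col L r f) S L"
  shows "inj_on (\<lambda>P. restrict P (int_faces B col L - S)) (Adm M B col L E mu)"
proof (rule inj_onI)
  fix P P' assume P: "P \<in> Adm M B col L E mu" and P': "P' \<in> Adm M B col L E mu"
    and eq: "restrict P (int_faces B col L - S) = restrict P' (int_faces B col L - S)"
  have finS: "finite S" using SI IF_fin[OF finL] finite_subset by blast
  have agree: "\<forall>f\<in>int_faces B col L - S. P f = P' f"
    using eq by (metis restrict_apply')
  define a where "a f = real_of_int (P f - P' f)" for f
  have "\<forall>r\<in>L. (\<Sum>f\<in>S. a f * eps col L r f) = 0"
  proof
    fix r assume r: "r \<in> L"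
    have "(\<Sum>f\<in>S. a f * eps col L r f) = real_of_int (\<Sum>f\<in>S. if on_face col L r f then P f - P' f else 0)"
      unfolding of_int_sum by (intro sum.cong) (auto simp: a_def eps_def)
    also have "(\<Sum>f\<in>S. if on_face col L r f then P f - P' f else 0) =
       (\<Sum>c=1..6. line_mom B col L P E r c) - (\<Sum>c=1..6. line_mom B col L P' E r c)"
      by (rule constraint_diff[OF SI finS agree, symmetric])
    also have "\<dots> = 0" using P P' r unfolding Adm_def by simp
    finally show "(\<Sum>f\<in>S. a f * eps col L r f) = 0" by simp
  qed
  then have aS: "\<forall>f\<in>S. a f = 0" using ind unfolding lin_indep_rows_def by blast
  show "P = P'"
  proof
    fix f
    show "P f = P' f"
    proof (cases "f \<in> int_faces B col L")
      case True
      then show ?thesis using agree aS unfolding a_def by (cases "f \<in> S") auto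
    next
      case False
      have "P f = 0" "P' f = 0" using P P' False unfolding Adm_def by blast+
      then show ?thesis by simp
    qed
  qed
qed

lemma adm_card:
  fixes M :: real
  assumes finL: "finite L" and SI: "S \<subseteq> int_faces B col L"
    and ind: "lin_indep_rows (\<lambda>f r. eps col L r f) S L"
  shows "finite (Adm M B col L E mu) \<and>
    card (Adm M B col L E mu) \<le> (\<Prod>f\<in>int_faces B col L - S. nat (2 * \<lfloor>M ^ ifc col L mu f\<rfloor> + 1))"
proof -
  define X where "X = int_faces B col L - S"
  define Nf where "Nf f = \<lfloor>M ^ ifc col L mu f\<rfloor>" for f
  define Q where "Q = PiE X (\<lambda>f. {- Nf f .. Nf f})"
  have finX: "finite X" unfolding X_def using IF_fin[OF finL] by simp
  have finQ: "finite Q" unfolding Q_def using finX by (intro finite_PiE) auto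
  have img: "(\<lambda>P. restrict P X) ` Adm M B col L E mu \<subseteq> Q"
  proof
    fix R assume "R \<in> (\<lambda>P. restrict P X) ` Adm M B col L E mu"
    then obtain P where P: "P \<in> Adm M B col L E mu" "R = restrict P X" by blast
    have "P f \<in> {- Nf f .. Nf f}" if f: "f \<in> X" for f
    proof -
      have "real_of_int \<bar>P f\<bar> \<le> M ^ ifc col L mu f" using P(1) f unfolding Adm_def X_def by auto
      then have "P f \<le> Nf f \<and> - P f \<le> Nf f" unfolding Nf_def by (auto simp: le_floor_iff)
      then show ?thesis by auto
    qed
    then show "R \<in> Q" unfolding Q_def P(2) by (simp add: restrict_PiE_iff)
  qed
  have inj: "inj_on (\<lambda>P. restrict P X) (Adm M B col L E mu)"
    unfolding X_def by (rule adm_inj[OF finL SI ind])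
  have fin: "finite (Adm M B col L E mu)"
    using finite_imageD[OF finite_subset[OF img finQ] inj] .
  have "card (Adm M B col L E mu) \<le> card Q" by (rule card_inj_on_le[OF inj img finQ])
  also have "card Q = (\<Prod>f\<in>X. card {- Nf f .. Nf f})" unfolding Q_def by (rule card_PiE[OF finX])
  also have "\<dots> = (\<Prod>f\<in>X. nat (2 * Nf f + 1))" by (intro prod.cong) auto
  finally show ?thesis using fin unfolding X_def Nf_def by simp
qed

lemma prod_floor_bound:
  fixes M :: real
  assumes M: "M \<ge> 1" and fin: "finite X"
  shows "(\<Prod>f\<in>X. real (nat (2 * \<lfloor>M ^ g f\<rfloor> + 1))) \<le> 3 ^ card X * M ^ (\<Sum>f\<in>X. g f)"
proof -
  have "(\<Prod>f\<in>X. real (nat (2 * \<lfloor>M ^ g f\<rfloor> + 1))) \<le> (\<Prod>f\<in>X. 3 * M ^ g f)"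
  proof (rule prod_mono)
    fix f
    have y1: "1 \<le> M ^ g f" using M by simp
    have "0 \<le> \<lfloor>M ^ g f\<rfloor>" using y1 by simp
    then have "real (nat (2 * \<lfloor>M ^ g f\<rfloor> + 1)) = 2 * real_of_int \<lfloor>M ^ g f\<rfloor> + 1" by simp
    also have "\<dots> \<le> 2 * M ^ g f + 1" by (simp add: of_int_floor_le)
    also have "\<dots> \<le> 3 * M ^ g f" using y1 by simp
    finally show "0 \<le> real (nat (2 * \<lfloor>M ^ g f\<rfloor> + 1)) \<and> real (nat (2 * \<lfloor>M ^ g f\<rfloor> + 1)) \<le> 3 * M ^ g f"
      by simp
  qed
  also have "\<dots> = 3 ^ card X * M ^ (\<Sum>f\<in>X. g f)"
    by (simp add: prod.distrib power_sum)
  finally show ?thesis .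
qed

lemma sumcount:
  assumes fin: "finite X" and bd: "\<forall>x\<in>X. g x \<le> N"
  shows "(\<Sum>x\<in>X. g x) = (\<Sum>i\<in>{1..N}. card {x\<in>X. i \<le> (g x :: nat)})"
proof -
  have "(\<Sum>i\<in>{1..N}. card {x\<in>X. i \<le> g x}) = (\<Sum>i\<in>{1..N}. \<Sum>x\<in>X. if i \<le> g x then 1 else 0)"
    using fin by (simp add: sum.If_cases Int_def)
  also have "\<dots> = (\<Sum>x\<in>X. \<Sum>i\<in>{1..N}. if i \<le> g x then 1 else 0)" by (rule sum.swap)
  also have "\<dots> = (\<Sum>x\<in>X. g x)"
  proof (rule sum.cong[OF refl])
    fix x assume x: "x \<in> X"
    have "(\<Sum>i\<in>{1..N}. if i \<le> g x then 1 else 0) = card {i\<in>{1..N}. i \<le> g x}"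
      by (simp add: sum.If_cases Int_def)
    also have "{i\<in>{1..N}. i \<le> g x} = {1..g x}" using bd x by auto
    finally show "(\<Sum>i\<in>{1..N}. if i \<le> g x then 1 else 0) = g x" by simp
  qed
  finally show ?thesis by simp
qed

lemma prod_powi:
  fixes M :: real
  assumes "M \<noteq> 0" "finite A"
  shows "(\<Prod>a\<in>A. M powi g a) = M powi (\<Sum>a\<in>A. g a)"
  using assms(2) by (induction A rule: finite_induct) (simp_all add: power_int_add assms(1))




lemma exponent_ineq:
  assumes finL: "finite L" and SI: "S \<subseteq> int_faces B col L"
    and sp: "\<forall>f\<in>Fi B col L mu i. spans (\<lambda>f l. eps col L l f) (S \<inter> Fi B col L mu i) f L"
  shows "- 2 * int (card (lines_ge L mu i)) + int (card (Fi B col L mu i)) - int (card (S \<inter> Fi B col L mu i))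
     \<le> (\<Sum>X\<in>line_comps (lines_ge L mu i). omega_deg B col L X)"
proof -
  define G where "G = lines_ge L mu i"
  have finG: "finite G" using finL unfolding G_def lines_ge_def by simp
  have "(\<Sum>X\<in>line_comps G. omega_deg B col L X) =
      - 2 * int (\<Sum>X\<in>line_comps G. card X) + int (\<Sum>X\<in>line_comps G. F_sub B col L X)
        - int (\<Sum>X\<in>line_comps G. R_sub B col L X)"
    unfolding omega_deg_def of_nat_sum
    by (simp add: sum.distrib sum_subtractf sum_distrib_left sum_negf)
  moreover have "(\<Sum>X\<in>line_comps G. card X) = card G" by (rule sum_card_comps[OF finG])
  moreover have "card (Fi B col L mu i) \<le> (\<Sum>X\<in>line_comps G. F_sub B col L X)"
    unfolding G_def by (rule KF[OF finL])
  moreover have "(\<Sum>X\<in>line_comps G. R_sub B col L X) \<le> card (S \<inter> Fi B col L mu i)"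
    unfolding G_def by (rule KR[OF finL SI sp])
  ultimately show ?thesis unfolding G_def by linarith
qed




theorem theorem2:
  fixes M m :: real
  assumes "M > 1" and "m > 0"
  shows "\<exists>K > 0. \<forall>(B :: nat set) (col :: nat \<Rightarrow> nat) (L :: line set) (E :: face \<Rightarrow> int)
            (mu :: line \<Rightarrow> nat).
           feyn_graph B col L \<and> connected_graph B L \<and> (\<forall>l\<in>L. 1 \<le> mu l) \<longrightarrow>
           \<bar>amplitude M m B col L E mu\<bar> \<le>
             K ^ card L *
             (\<Prod>i\<in>{i. 1 \<le> i \<and> (\<exists>l\<in>L. i \<le> mu l)}.
                \<Prod>H\<in>line_comps (lines_ge L mu i). M powi omega_deg B col L H)"
proof -
  have M: "M > 1" and m: "m > 0" using assms by auto
  define C where "C = M\<^sup>2 * (1 + 1 / m\<^sup>2)"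
  define K where "K = 3 ^ 6 * C"
  have C0: "C > 0" unfolding C_def using M m by (simp add: add_pos_pos)
  have K0: "K > 0" unfolding K_def using C0 by simp
  have main: "\<bar>amplitude M m B col L E mu\<bar> \<le>
             K ^ card L *
             (\<Prod>i\<in>{i. 1 \<le> i \<and> (\<exists>l\<in>L. i \<le> mu l)}.
                \<Prod>H\<in>line_comps (lines_ge L mu i). M powi omega_deg B col L H)"
    if fg: "feyn_graph B col L" and mu1: "\<forall>l\<in>L. 1 \<le> mu l" for B col L E mu
  proof -
    have finL: "finite L" by (rule finite_L[OF fg])
    have finIF: "finite (int_faces B col L)" by (rule IF_fin[OF finL])
    define N where "N = (if L = {} then 0 else Max (mu ` L))"
    have muN: "\<forall>l\<in>L. mu l \<le> N" unfolding N_def using finL by auto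
    have Iset: "{i. 1 \<le> i \<and> (\<exists>l\<in>L. i \<le> mu l)} = {1..N}"
    proof (intro equalityI subsetI)
      fix i assume "i \<in> {i. 1 \<le> i \<and> (\<exists>l\<in>L. i \<le> mu l)}"
      then show "i \<in> {1..N}" using muN by force
    next
      fix i assume i: "i \<in> {1..N}"
      then have "L \<noteq> {}" unfolding N_def by (auto split: if_splits)
      then have "Max (mu ` L) \<in> mu ` L" using finL by (intro Max_in) auto
      then obtain l where l: "l \<in> L" "Max (mu ` L) = mu l" by (rule imageE)
      then have "mu l = N" using \<open>L \<noteq> {}\<close> unfolding N_def by simp
      with l(1) have "l \<in> L" "mu l = N" by auto
      then show "i \<in> {i. 1 \<le> i \<and> (\<exists>l\<in>L. i \<le> mu l)}" using i by auto
    qed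
    have ifcN: "\<forall>f\<in>int_faces B col L. ifc col L mu f \<le> N"
    proof
      fix f assume f: "f \<in> int_faces B col L"
      obtain l where "l \<in> LF col L f" "mu l = ifc col L mu f" using ifc_attained[OF finL f] by blast
      then show "ifc col L mu f \<le> N" using muN unfolding LF_def by force
    qed
    define F where "F = Fi B col L mu"
    have finF: "finite (F i)" for i unfolding F_def Fi_def using finIF by simp
    have antiF: "F (Suc i) \<subseteq> F i" for i unfolding F_def Fi_def by auto
    have empF: "F i = {}" if "i > N" for i unfolding F_def Fi_def using ifcN that by force
    have F0: "F 0 = int_faces B col L" unfolding F_def Fi_def by auto
    obtain S where S: "S \<subseteq> F 0" "lin_indep_rows (\<lambda>f r. eps col L r f) S L"
      "\<forall>i. \<forall>f\<in>F i. spans (\<lambda>f r. eps col L r f) (S \<inter> F i) f L"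
      using nested_basis[of F N "\<lambda>f r. eps col L r f" L] finF antiF empF by blast
    have SI: "S \<subseteq> int_faces B col L" using S(1) F0 by simp
    have finS: "finite S" using SI finIF finite_subset by blast
    define T where "T P = (\<Prod>l\<in>L. cov_slice M m (mu l) (line_mom B col L P E l))" for P
    define Ad where "Ad = Adm M B col L E mu"
    define SM where "SM = (\<Sum>l\<in>L. mu l)"
    define SF where "SF = (\<Sum>f\<in>int_faces B col L - S. ifc col L mu f)"
    have adc: "finite Ad \<and> card Ad \<le> (\<Prod>f\<in>int_faces B col L - S. nat (2 * \<lfloor>M ^ ifc col L mu f\<rfloor> + 1))"
      unfolding Ad_def by (rule adm_card[OF finL SI S(2)])
    have T0: "0 \<le> T P" for P
      unfolding T_def using cs_bound[OF M m] mu1 by (intro prod_nonneg) blast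
    have Tb: "T P \<le> C ^ card L / M ^ (2 * SM)" for P
    proof -
      have "T P \<le> (\<Prod>l\<in>L. C / M ^ (2 * mu l))"
        unfolding T_def C_def using cs_bound[OF M m] mu1 by (intro prod_mono) blast
      also have "\<dots> = C ^ card L / M ^ (2 * SM)"
      proof -
        have "(\<Prod>l\<in>L. M ^ (2 * mu l)) = M ^ (\<Sum>l\<in>L. 2 * mu l)" by (rule power_sum[symmetric])
        also have "\<dots> = M ^ (2 * SM)" unfolding SM_def by (simp add: sum_distrib_left)
        finally have "(\<Prod>l\<in>L. M ^ (2 * mu l)) = M ^ (2 * SM)" .
        then show ?thesis by (simp add: prod_dividef)
      qed
      finally show ?thesis .
    qed
    have amp: "amplitude M m B col L E mu = sum T Ad"
    proof -
      have "amplitude M m B col L E mu = infsum T {P :: face \<Rightarrow> int. \<forall>f. f \<notin> int_faces B col L \<longrightarrow> P f = 0}"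
        unfolding amplitude_def T_def by simp
      also have "\<dots> = infsum T Ad"
      proof (rule infsum_cong_neutral)
        fix x assume "x \<in> Ad - {P :: face \<Rightarrow> int. \<forall>f. f \<notin> int_faces B col L \<longrightarrow> P f = 0}"
        then show "T x = 0" unfolding Ad_def Adm_def by auto
      next
        fix x assume x: "x \<in> {P :: face \<Rightarrow> int. \<forall>f. f \<notin> int_faces B col L \<longrightarrow> P f = 0} - Ad"
        show "T x = 0"
        proof (rule ccontr)
          assume "T x \<noteq> 0"
          then have "x \<in> Ad" unfolding Ad_def T_def using term_adm[OF M finL mu1] x by blast
          then show False using x by blast
        qed
      qed simp
      also have "\<dots> = sum T Ad" using adc by simp
      finally show ?thesis .
    qed
    have "\<bar>amplitude M m B col L E mu\<bar> = sum T Ad" unfolding amp using T0 by (simp add: sum_nonneg)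
    also have "\<dots> \<le> real (card Ad) * (C ^ card L / M ^ (2 * SM))"
      by (rule sum_bounded_above) (rule Tb)
    also have "\<dots> \<le> (3 ^ card (int_faces B col L - S) * M ^ SF) * (C ^ card L / M ^ (2 * SM))"
    proof (rule mult_right_mono)
      have "real (card Ad) \<le> real (\<Prod>f\<in>int_faces B col L - S. nat (2 * \<lfloor>M ^ ifc col L mu f\<rfloor> + 1))"
        using adc by linarith
      also have "\<dots> = (\<Prod>f\<in>int_faces B col L - S. real (nat (2 * \<lfloor>M ^ ifc col L mu f\<rfloor> + 1)))"
        by (rule of_nat_prod)
      also have "\<dots> \<le> 3 ^ card (int_faces B col L - S) * M ^ SF"
        unfolding SF_def using M finIF by (intro prod_floor_bound) auto
      finally show "real (card Ad) \<le> 3 ^ card (int_faces B col L - S) * M ^ SF" .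
      show "0 \<le> C ^ card L / M ^ (2 * SM)" using C0 M by simp
    qed
    also have "\<dots> \<le> (3 ^ (6 * card L) * M ^ SF) * (C ^ card L / M ^ (2 * SM))"
    proof (rule mult_right_mono)
      have "card (int_faces B col L - S) \<le> 6 * card L"
        using IF_card[OF finL, of B col] card_mono[OF finIF, of "int_faces B col L - S"] by auto
      then have "(3::real) ^ card (int_faces B col L - S) \<le> 3 ^ (6 * card L)"
        by (intro power_increasing) auto
      then show "3 ^ card (int_faces B col L - S) * M ^ SF \<le> 3 ^ (6 * card L) * M ^ SF"
        using M by (intro mult_right_mono) auto
      show "0 \<le> C ^ card L / M ^ (2 * SM)" using C0 M by simp
    qed
    also have "\<dots> = K ^ card L * (M ^ SF / M ^ (2 * SM))"
      unfolding K_def by (simp add: power_mult_distrib power_mult)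
    also have "M ^ SF / M ^ (2 * SM) = M powi (int SF - int (2 * SM))"
    proof -
      have "M powi (2 * int SM) = M ^ (2 * SM)"
        by (metis of_nat_mult of_nat_numeral power_int_of_nat)
      then show ?thesis using M by (simp add: power_int_diff)
    qed
    also have "\<dots> \<le> M powi (\<Sum>i\<in>{1..N}. \<Sum>X\<in>line_comps (lines_ge L mu i). omega_deg B col L X)"
    proof (rule power_int_increasing)
      show "1 \<le> M" using M by simp
      have per: "- 2 * int (card (lines_ge L mu i)) + int (card (F i)) - int (card (S \<inter> F i))
          \<le> (\<Sum>X\<in>line_comps (lines_ge L mu i). omega_deg B col L X)" for i
        unfolding F_def by (rule exponent_ineq[OF finL SI]) (use S(3) in \<open>simp add: F_def\<close>)
      have sm: "SM = (\<Sum>i\<in>{1..N}. card (lines_ge L mu i))"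
        unfolding SM_def lines_ge_def by (rule sumcount[OF finL muN])
      have sf: "SF = (\<Sum>i\<in>{1..N}. card {f\<in>int_faces B col L - S. i \<le> ifc col L mu f})"
        unfolding SF_def using finIF ifcN by (intro sumcount) auto
      have cd: "int (card (F i)) - int (card (S \<inter> F i)) = int (card {f\<in>int_faces B col L - S. i \<le> ifc col L mu f})" for i
      proof -
        have "{f\<in>int_faces B col L - S. i \<le> ifc col L mu f} = F i - S" unfolding F_def Fi_def by auto
        moreover have "card (F i) = card (F i - S) + card (S \<inter> F i)"
          using finF[of i] by (metis card_Diff_subset_Int finite_Int inf_commute card_mono
              inf_le2 le_add_diff_inverse2)
        ultimately show ?thesis by simp
      qed
      have "int SF - int (2 * SM) = (\<Sum>i\<in>{1..N}. - 2 * int (card (lines_ge L mu i)) + int (card (F i)) - int (card (S \<inter> F i)))"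
      proof -
        have a: "int SF = (\<Sum>i\<in>{1..N}. int (card (F i)) - int (card (S \<inter> F i)))"
          unfolding sf of_nat_sum using cd by (intro sum.cong refl) (rule cd[symmetric])
        have b: "int (2 * SM) = (\<Sum>i\<in>{1..N}. 2 * int (card (lines_ge L mu i)))"
          unfolding sm by (simp add: of_nat_sum sum_distrib_left)
        show ?thesis unfolding a b
          by (simp add: sum.distrib sum_subtractf sum_negf[symmetric] algebra_simps)
      qed
      also have "\<dots> \<le> (\<Sum>i\<in>{1..N}. \<Sum>X\<in>line_comps (lines_ge L mu i). omega_deg B col L X)"
        by (rule sum_mono) (rule per)
      finally show "int SF - int (2 * SM) \<le> (\<Sum>i\<in>{1..N}. \<Sum>X\<in>line_comps (lines_ge L mu i). omega_deg B col L X)" .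
    qed
    also have "\<dots> = (\<Prod>i\<in>{1..N}. \<Prod>X\<in>line_comps (lines_ge L mu i). M powi omega_deg B col L X)"
    proof -
      have fc: "finite (line_comps (lines_ge L mu i))" for i
        using finL by (intro comps_fin) (simp add: lines_ge_def)
      have "(\<Prod>i\<in>{1..N}. \<Prod>X\<in>line_comps (lines_ge L mu i). M powi omega_deg B col L X)
          = (\<Prod>i\<in>{1..N}. M powi (\<Sum>X\<in>line_comps (lines_ge L mu i). omega_deg B col L X))"
        using M fc by (intro prod.cong refl prod_powi) auto
      also have "\<dots> = M powi (\<Sum>i\<in>{1..N}. \<Sum>X\<in>line_comps (lines_ge L mu i). omega_deg B col L X)"
        using M by (intro prod_powi) auto
      finally show ?thesis by simp
    qed
    finally show ?thesis unfolding Iset using K0 by simp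
  qed
  show ?thesis using K0 main by blast
qed


end
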